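(* Let $G$ be a connected graph with $n\ge 2$ vertices, $m$ edges and Randi\'c index $R=R(G)$. Then $$EE(G) > e^{m/R} + (n-1) - \frac{m}{R}.$$
   Context: All graphs are finite, simple and undirected. For a graph $G$ with adjacency matrix $A(G)$ having eigenvalues $\lambda_1\ge\lambda_2\ge\cdots\ge\lambda_n$, the Estrada index is $EE(G)=\sum_{i=1}^n e^{\lambda_i}$. Writing $d(i)$ for the degree of vertex $i$ and $\mathcal{E}(G)$ for the edge set, the general Randi\'c index is $R_\alpha(G)=\sum_{ij\in\mathcal{E}(G)}(d(i)d(j))^\alpha$ for real $\alpha$, and the Randi\'c index is $R=R_{-1/2}(G)=\sum_{ij\in\mathcal{E}(G)}(d(i)d(j))^{-1/2}$. *)

theory Defs
  imports "HOL-Analysis.Analysis" "Jordan_Normal_Form.Char_Poly"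
begin

definition simple_graph :: "nat \<Rightarrow> (nat \<Rightarrow> nat \<Rightarrow> bool) \<Rightarrow> bool" where
  "simple_graph n adj \<longleftrightarrow>
     (\<forall>i j. adj i j \<longrightarrow> i < n \<and> j < n) \<and>
     (\<forall>i j. adj i j \<longrightarrow> adj j i) \<and>
     (\<forall>i. \<not> adj i i)"

definition connected_graph :: "nat \<Rightarrow> (nat \<Rightarrow> nat \<Rightarrow> bool) \<Rightarrow> bool" where
  "connected_graph n adj \<longleftrightarrow> (\<forall>i<n. \<forall>j<n. adj\<^sup>*\<^sup>* i j)"

definition graph_edges :: "nat \<Rightarrow> (nat \<Rightarrow> nat \<Rightarrow> bool) \<Rightarrow> nat set set" where
  "graph_edges n adj = {{i, j} | i j. i < n \<and> j < n \<and> adj i j}"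

definition degree :: "nat \<Rightarrow> (nat \<Rightarrow> nat \<Rightarrow> bool) \<Rightarrow> nat \<Rightarrow> nat" where
  "degree n adj i = card {j. j < n \<and> adj i j}"

definition adj_matrix :: "nat \<Rightarrow> (nat \<Rightarrow> nat \<Rightarrow> bool) \<Rightarrow> real mat" where
  "adj_matrix n adj = mat n n (\<lambda>(i, j). if adj i j then 1 else 0)"

text \<open>Eigenvalues of the adjacency matrix, with multiplicity: the roots of its characteristic
  polynomial (which splits over the reals, the matrix being symmetric).\<close>

definition adj_eigenvalues :: "nat \<Rightarrow> (nat \<Rightarrow> nat \<Rightarrow> bool) \<Rightarrow> real multiset" where
  "adj_eigenvalues n adj = proots (char_poly (adj_matrix n adj))"

definition estrada_index :: "nat \<Rightarrow> (nat \<Rightarrow> nat \<Rightarrow> bool) \<Rightarrow> real" where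
  "estrada_index n adj = (\<Sum>x\<in>#adj_eigenvalues n adj. exp x)"

definition general_randic :: "real \<Rightarrow> nat \<Rightarrow> (nat \<Rightarrow> nat \<Rightarrow> bool) \<Rightarrow> real" where
  "general_randic \<alpha> n adj =
     (\<Sum>e\<in>graph_edges n adj. (\<Prod>v\<in>e. real (degree n adj v)) powr \<alpha>)"

definition randic :: "nat \<Rightarrow> (nat \<Rightarrow> nat \<Rightarrow> bool) \<Rightarrow> real" where
  "randic n adj = general_randic (-1/2) n adj"

end

theory Submission
  imports Defs "Jordan_Normal_Form.Schur_Decomposition"
begin


lemma compK:
  fixes n :: nat
  shows "compact {x :: nat \<Rightarrow> real. (\<forall>i. x i \<in> (if i < n then {-1..1} else {0})) \<and> (\<Sum>i<n. (x i)\<^sup>2) = 1}"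
proof -
  have c1: "compact (PiE UNIV (\<lambda>i::nat. if i < n then {-1..1::real} else {0}))"
    using compactin_PiE[of "\<lambda>_. euclidean" UNIV "\<lambda>i::nat. if i < n then {-1..1::real} else {0}"]
    by (simp add: euclidean_product_topology)
  have c2: "closed {x :: nat \<Rightarrow> real. (\<Sum>i<n. (x i)\<^sup>2) = 1}"
    by (intro closed_Collect_eq continuous_intros continuous_on_product_coordinates)
  have eq: "{x :: nat \<Rightarrow> real. (\<forall>i. x i \<in> (if i < n then {-1..1} else {0})) \<and> (\<Sum>i<n. (x i)\<^sup>2) = 1}
     = PiE UNIV (\<lambda>i::nat. if i < n then {-1..1::real} else {0}) \<inter> {x. (\<Sum>i<n. (x i)\<^sup>2) = 1}"
    by (auto simp: PiE_def Pi_def)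
  show ?thesis unfolding eq using c1 c2 by (rule compact_Int_closed)
qed

lemma quad_expand:
  fixes a :: "nat \<Rightarrow> nat \<Rightarrow> real"
  assumes sym: "\<And>i j. a i j = a j i"
  shows "(\<Sum>i<n. \<Sum>j<n. a i j * (x i + t * y i) * (x j + t * y j))
     = (\<Sum>i<n. \<Sum>j<n. a i j * x i * x j) + 2 * t * (\<Sum>i<n. y i * (\<Sum>j<n. a i j * x j))
       + t\<^sup>2 * (\<Sum>i<n. \<Sum>j<n. a i j * y i * y j)"
proof -
  have sw: "(\<Sum>i<n. \<Sum>j<n. a i j * x i * y j) = (\<Sum>i<n. \<Sum>j<n. a i j * y i * x j)"
    by (subst sum.swap) (simp add: sym mult.commute mult.left_commute)
  have "(\<Sum>i<n. \<Sum>j<n. a i j * (x i + t * y i) * (x j + t * y j))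
     = (\<Sum>i<n. \<Sum>j<n. a i j * x i * x j) + t * (\<Sum>i<n. \<Sum>j<n. a i j * x i * y j)
       + t * (\<Sum>i<n. \<Sum>j<n. a i j * y i * x j) + t\<^sup>2 * (\<Sum>i<n. \<Sum>j<n. a i j * y i * y j)"
    by (simp add: algebra_simps power2_eq_square sum.distrib sum_distrib_left)
  also have "\<dots> = (\<Sum>i<n. \<Sum>j<n. a i j * x i * x j) + 2 * t * (\<Sum>i<n. y i * (\<Sum>j<n. a i j * x j))
       + t\<^sup>2 * (\<Sum>i<n. \<Sum>j<n. a i j * y i * y j)"
    unfolding sw by (simp add: sum_distrib_left algebra_simps)
  finally show ?thesis .
qed

lemma norm_expand:
  fixes x y :: "nat \<Rightarrow> real"
  shows "(\<Sum>i<n. (x i + t * y i)\<^sup>2) = (\<Sum>i<n. (x i)\<^sup>2) + 2 * t * (\<Sum>i<n. y i * x i) + t\<^sup>2 * (\<Sum>i<n. (y i)\<^sup>2)"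
  by (simp add: algebra_simps power2_eq_square sum.distrib sum_distrib_left)

lemma lin_zero:
  fixes L q :: real
  assumes "\<And>t. 2 * t * L + t\<^sup>2 * q \<le> 0"
  shows "L = 0"
proof (rule ccontr)
  assume L: "L \<noteq> 0"
  define e where "e = 1 / (1 + \<bar>q\<bar>)"
  have e: "e > 0" "e * \<bar>q\<bar> < 1" unfolding e_def by (auto simp: field_simps)
  have "2 * (e*L) * L + (e*L)\<^sup>2 * q \<le> 0" by (rule assms)
  hence "L\<^sup>2 * (e * (2 + e * q)) \<le> 0" by (simp add: algebra_simps power2_eq_square)
  moreover have "L\<^sup>2 > 0" using L by simp
  moreover have "e * (2 + e * q) > 0"
  proof -
    have "e * q \<ge> - (e * \<bar>q\<bar>)" using e(1) by (simp add: abs_if mult_less_0_iff)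
    thus ?thesis using e by (intro mult_pos_pos) auto
  qed
  ultimately show False by (metis mult_pos_pos not_le)
qed

lemma rayleigh:
  fixes a :: "nat \<Rightarrow> nat \<Rightarrow> real"
  assumes sym: "\<And>i j. a i j = a j i" and n: "n > 0"
  shows "\<exists>c x. (\<exists>i<n. x i \<noteq> 0) \<and> (\<forall>i<n. (\<Sum>j<n. a i j * x j) = c * x i) \<and>
     (\<forall>y. (\<Sum>i<n. \<Sum>j<n. a i j * y i * y j) \<le> c * (\<Sum>i<n. (y i)\<^sup>2))"
proof -
  define K where "K = {x :: nat \<Rightarrow> real. (\<forall>i. x i \<in> (if i < n then {-1..1} else {0})) \<and> (\<Sum>i<n. (x i)\<^sup>2) = 1}"
  define Q where "Q = (\<lambda>y::nat\<Rightarrow>real. \<Sum>i<n. \<Sum>j<n. a i j * y i * y j)"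
  define N where "N = (\<lambda>y::nat\<Rightarrow>real. \<Sum>i<n. (y i)\<^sup>2)"
  have "compact K" unfolding K_def by (rule compK)
  moreover have "K \<noteq> {}"
  proof -
    have "(\<Sum>i<n. (if i = 0 then 1 else 0::real)\<^sup>2) = (\<Sum>i<n. if i = 0 then 1 else 0)" by (intro sum.cong) auto
    also have "\<dots> = 1" using n by simp
    finally have e: "(\<Sum>i<n. (if i = 0 then 1 else 0::real)\<^sup>2) = 1" .
    have "(\<lambda>i. if i = 0 then 1 else 0::real) \<in> K" using n
      by (auto simp: K_def e)
    thus ?thesis by auto
  qed
  moreover have "continuous_on K Q" unfolding Q_def
    by (intro continuous_intros continuous_on_product_coordinates continuous_on_subset[OF _ subset_UNIV])
  ultimately obtain x0 where x0: "x0 \<in> K" and mx: "\<And>y. y \<in> K \<Longrightarrow> Q y \<le> Q x0"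
    using continuous_attains_sup by metis
  define c where "c = Q x0"
  have N1: "N x0 = 1" using x0 unfolding K_def N_def by auto
  have bound: "Q y \<le> c * N y" for y
  proof (cases "N y = 0")
    case True
    hence "\<forall>i<n. y i = 0" unfolding N_def
      by (subst (asm) sum_nonneg_eq_0_iff) auto
    hence "Q y = 0" unfolding Q_def by simp
    thus ?thesis using True by simp
  next
    case False
    have Npos: "N y > 0" using False unfolding N_def
      by (metis less_eq_real_def sum_nonneg zero_le_power2)
    define s where "s = sqrt (N y)"
    have s: "s > 0" "s\<^sup>2 = N y" using Npos unfolding s_def by auto
    define z where "z = (\<lambda>i. if i < n then y i / s else 0)"
    have Nz: "N z = 1"
    proof -
      have "N z = (\<Sum>i<n. (y i)\<^sup>2) / s\<^sup>2" unfolding N_def z_def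
        by (simp add: power_divide sum_divide_distrib)
      thus ?thesis using s Npos unfolding N_def by simp
    qed
    have "z \<in> K"
    proof -
      have "-1 \<le> z i \<and> z i \<le> 1" if "i < n" for i
      proof -
        have "(z i)\<^sup>2 \<le> N z" unfolding N_def
          using that by (intro member_le_sum) auto
        hence "(z i)\<^sup>2 \<le> 1\<^sup>2" using Nz by simp
        hence "\<bar>z i\<bar> \<le> 1" using abs_le_square_iff[of "z i" 1] by simp
        thus ?thesis by (simp add: abs_le_iff)
      qed
      thus ?thesis using Nz unfolding K_def N_def by (auto simp: z_def)
    qed
    hence "Q z \<le> c" using mx c_def by auto
    moreover have "Q z = Q y / s\<^sup>2" unfolding Q_def z_def
      by (simp add: sum_divide_distrib power2_eq_square)
    ultimately have "Q y / N y \<le> c" using s by simp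
    thus ?thesis using Npos by (simp add: divide_le_eq mult.commute)
  qed
  define w where "w = (\<lambda>i. (\<Sum>j<n. a i j * x0 j) - c * x0 i)"
  have L0: "(\<Sum>i<n. y i * (\<Sum>j<n. a i j * x0 j)) - c * (\<Sum>i<n. y i * x0 i) = 0" for y
  proof (rule lin_zero[where q = "Q y - c * N y"])
    fix t :: real
    have "Q (\<lambda>i. x0 i + t * y i) \<le> c * N (\<lambda>i. x0 i + t * y i)" by (rule bound)
    thus "2 * t * ((\<Sum>i<n. y i * (\<Sum>j<n. a i j * x0 j)) - c * (\<Sum>i<n. y i * x0 i)) + t\<^sup>2 * (Q y - c * N y) \<le> 0"
      unfolding Q_def N_def quad_expand[OF sym] norm_expand c_def
      using N1 unfolding N_def Q_def by (simp add: algebra_simps)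
  qed
  have ww: "\<And>i. w i * w i = w i * (\<Sum>j<n. a i j * x0 j) - c * (w i * x0 i)"
    by (simp add: w_def algebra_simps)
  have "(\<Sum>i<n. w i * w i) = (\<Sum>i<n. w i * (\<Sum>j<n. a i j * x0 j)) - c * (\<Sum>i<n. w i * x0 i)"
    by (simp only: ww sum_subtractf sum_distrib_left)
  hence "(\<Sum>i<n. w i * w i) = 0" using L0[of w] by simp
  hence "\<forall>i<n. w i * w i = 0"
    by (subst (asm) sum_nonneg_eq_0_iff) auto
  hence eig: "\<forall>i<n. (\<Sum>j<n. a i j * x0 j) = c * x0 i" unfolding w_def by simp
  have "\<exists>i<n. x0 i \<noteq> 0"
  proof (rule ccontr)
    assume "\<not> ?thesis"
    hence "N x0 = 0" unfolding N_def by simp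
    thus False using N1 by simp
  qed
  with eig bound show ?thesis unfolding Q_def N_def by blast
qed


lemma trace_comm:
  fixes X Y :: "'a::comm_ring_1 mat"
  assumes X: "X \<in> carrier_mat n n" and Y: "Y \<in> carrier_mat n n"
  shows "(\<Sum>i\<in>{0..<n}. (X * Y) $$ (i,i)) = (\<Sum>i\<in>{0..<n}. (Y * X) $$ (i,i))"
proof -
  have "(\<Sum>i\<in>{0..<n}. (X * Y) $$ (i,i)) = (\<Sum>i\<in>{0..<n}. \<Sum>k\<in>{0..<n}. X $$ (i,k) * Y $$ (k,i))"
    using X Y by (intro sum.cong) (auto simp: scalar_prod_def)
  also have "\<dots> = (\<Sum>k\<in>{0..<n}. \<Sum>i\<in>{0..<n}. Y $$ (k,i) * X $$ (i,k))"
    by (subst sum.swap) (simp add: mult.commute)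
  also have "\<dots> = (\<Sum>i\<in>{0..<n}. (Y * X) $$ (i,i))"
    using X Y by (intro sum.cong) (auto simp: scalar_prod_def)
  finally show ?thesis .
qed

lemma trace_similar:
  fixes A B :: "'a::comm_ring_1 mat"
  assumes A: "A \<in> carrier_mat n n" and sim: "similar_mat A B"
  shows "(\<Sum>i\<in>{0..<n}. A $$ (i,i)) = (\<Sum>i\<in>{0..<n}. B $$ (i,i))"
proof -
  from similar_matD[OF sim] obtain m P Q where
    c: "{A, B, P, Q} \<subseteq> carrier_mat m m" and QP: "Q * P = 1\<^sub>m m" and AB: "A = P * B * Q" by blast
  have m: "m = n" using c A by auto
  have P: "P \<in> carrier_mat n n" and Q: "Q \<in> carrier_mat n n" and B: "B \<in> carrier_mat n n"
    using c m by auto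
  have "(\<Sum>i\<in>{0..<n}. A $$ (i,i)) = (\<Sum>i\<in>{0..<n}. ((P * B) * Q) $$ (i,i))" using AB by simp
  also have "\<dots> = (\<Sum>i\<in>{0..<n}. (Q * (P * B)) $$ (i,i))"
    by (rule trace_comm) (use P B Q in auto)
  also have "Q * (P * B) = (Q * P) * B" using P B Q by (simp add: assoc_mult_mat)
  also have "\<dots> = B" using QP B m by simp
  finally show ?thesis .
qed

lemma herm_eig_real:
  fixes Ac :: "complex mat"
  assumes Ac: "Ac \<in> carrier_mat n n"
    and sym: "\<And>i j. i<n \<Longrightarrow> j<n \<Longrightarrow> Ac $$ (i,j) = Ac $$ (j,i)"
    and re: "\<And>i j. i<n \<Longrightarrow> j<n \<Longrightarrow> cnj (Ac $$ (i,j)) = Ac $$ (i,j)"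
    and ev: "eigenvalue Ac d"
  shows "Im d = 0"
proof -
  obtain v where v: "v \<in> carrier_vec n" "v \<noteq> 0\<^sub>v n" "Ac *\<^sub>v v = d \<cdot>\<^sub>v v"
    using ev Ac unfolding eigenvalue_def eigenvector_def by auto
  have evi: "(\<Sum>j\<in>{0..<n}. Ac $$ (i,j) * v$j) = d * v$i" if "i<n" for i
  proof -
    have "(Ac *\<^sub>v v) $ i = d * v $ i" using v(3) that v(1) by simp
    thus ?thesis using that Ac v(1) by (simp add: scalar_prod_def)
  qed
  define SS where "SS = (\<Sum>i\<in>{0..<n}. \<Sum>j\<in>{0..<n}. cnj (v$i) * Ac $$ (i,j) * v$j)"
  define Nv where "Nv = (\<Sum>i\<in>{0..<n}. cnj (v$i) * v$i)"
  have S1: "SS = d * Nv"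
  proof -
    have "SS = (\<Sum>i\<in>{0..<n}. cnj (v$i) * (\<Sum>j\<in>{0..<n}. Ac $$ (i,j) * v$j))"
      unfolding SS_def by (simp add: sum_distrib_left mult.assoc)
    also have "\<dots> = (\<Sum>i\<in>{0..<n}. d * (cnj (v$i) * v$i))"
      by (intro sum.cong) (auto simp: evi)
    finally show ?thesis unfolding Nv_def by (simp add: sum_distrib_left)
  qed
  have S2: "cnj SS = SS"
  proof -
    have "cnj SS = (\<Sum>i\<in>{0..<n}. \<Sum>j\<in>{0..<n}. v$i * Ac $$ (i,j) * cnj (v$j))"
      unfolding SS_def by (simp add: re)
    also have "\<dots> = (\<Sum>j\<in>{0..<n}. \<Sum>i\<in>{0..<n}. v$i * Ac $$ (i,j) * cnj (v$j))"
      by (rule sum.swap)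
    also have "\<dots> = SS" unfolding SS_def
      by (intro sum.cong refl) (auto simp: sym mult.commute mult.left_commute)
    finally show ?thesis .
  qed
  have Nv: "Nv = of_real (\<Sum>i\<in>{0..<n}. (cmod (v$i))\<^sup>2)"
    unfolding Nv_def of_real_sum by (intro sum.cong refl) (metis complex_norm_square mult.commute)
  obtain i where i: "i < n" "v $ i \<noteq> 0"
  proof -
    have "\<exists>i<n. v $ i \<noteq> 0"
    proof (rule ccontr)
      assume "\<not> ?thesis"
      hence "v = 0\<^sub>v n" using v(1) by (intro eq_vecI) auto
      thus False using v(2) by simp
    qed
    thus ?thesis using that by blast
  qed
  have "(\<Sum>i\<in>{0..<n}. (cmod (v$i))\<^sup>2) > 0"
  proof -
    have "(\<Sum>i\<in>{0..<n}. (cmod (v$i))\<^sup>2) \<ge> (cmod (v$i))\<^sup>2"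
      using i by (intro member_le_sum) auto
    moreover have "(cmod (v$i))\<^sup>2 > 0" using i by simp
    ultimately show ?thesis by linarith
  qed
  hence Nnz1: "Nv \<noteq> 0" unfolding Nv
    by (metis less_irrefl of_real_eq_0_iff)
  have Nnz2: "cnj Nv = Nv" unfolding Nv by (rule complex_cnj_complex_of_real)
  note Nnz = Nnz1 Nnz2
  have "cnj d * Nv = d * Nv" using S1 S2 Nnz(2)
    by (metis complex_cnj_mult)
  hence "cnj d = d" using Nnz(1) by simp
  thus ?thesis by (metis Reals_cnj_iff complex_is_Real_iff)
qed

lemma sym_char_poly_real:
  fixes A :: "real mat"
  assumes A: "A \<in> carrier_mat n n" and sym: "\<And>i j. i<n \<Longrightarrow> j<n \<Longrightarrow> A $$ (i,j) = A $$ (j,i)"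
  shows "\<exists>rs. char_poly A = (\<Prod>r\<leftarrow>rs. [:-r,1:]) \<and> length rs = n \<and> sum_list rs = (\<Sum>i\<in>{0..<n}. A $$ (i,i))"
proof -
  define Ac where "Ac = map_mat complex_of_real A"
  have Ac: "Ac \<in> carrier_mat n n" using A by (simp add: Ac_def)
  obtain as where as: "char_poly Ac = (\<Prod>a\<leftarrow>as. [:-a,1:])" using char_poly_factorized[OF Ac] by blast
  define B where "B = schur_upper_triangular Ac as"
  note sch = schur_upper_triangular[OF Ac as]
  have Bc: "B \<in> carrier_mat n n" and ut: "upper_triangular B" and sim: "similar_mat Ac B"
    using sch B_def by auto
  define ds where "ds = diag_mat B"
  have cpB: "char_poly Ac = (\<Prod>a\<leftarrow>ds. [:-a,1:])"
    using char_poly_similar[OF sim] char_poly_upper_triangular[OF Bc ut] ds_def by simp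
  have lends: "length ds = n" using Bc ds_def by (simp add: diag_mat_def)
  have cpA: "char_poly Ac = map_poly of_real (char_poly A)"
    using of_real_hom.char_poly_hom[OF A] Ac_def by simp
  have real: "Im d = 0" if d: "d \<in> set ds" for d
  proof -
    have "poly (char_poly Ac) d = 0" using cpB d by (simp add: linear_poly_root)
    hence "eigenvalue Ac d" using eigenvalue_root_char_poly[OF Ac] by simp
    moreover have "\<And>i j. i<n \<Longrightarrow> j<n \<Longrightarrow> Ac$$(i,j) = Ac$$(j,i)" using A sym by (simp add: Ac_def)
    moreover have "\<And>i j. i<n \<Longrightarrow> j<n \<Longrightarrow> cnj (Ac$$(i,j)) = Ac$$(i,j)" using A by (simp add: Ac_def)
    ultimately show ?thesis using herm_eig_real[OF Ac] by blast
  qed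
  define rs where "rs = map Re ds"
  have dsr: "ds = map complex_of_real rs"
    unfolding rs_def using real by (induction ds) (auto simp: complex_eq_iff)
  have "char_poly A = (\<Prod>r\<leftarrow>rs. [:-r,1:])"
  proof (rule poly_ext)
    fix x
    have "complex_of_real (poly (char_poly A) x) = poly (char_poly Ac) (of_real x)"
      using cpA of_real_hom.poly_map_poly by simp
    also have "\<dots> = (\<Prod>a\<leftarrow>ds. (of_real x - a))" unfolding cpB poly_prod_list
      by (simp add: o_def)
    also have "\<dots> = complex_of_real (\<Prod>r\<leftarrow>rs. (x - r))" unfolding dsr
      by (induction rs) auto
    finally show "poly (char_poly A) x = poly (\<Prod>r\<leftarrow>rs. [:-r,1:]) x"
      by (simp add: poly_prod_list o_def)
  qed
  moreover have "length rs = n" using lends rs_def by simp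
  moreover have "sum_list rs = (\<Sum>i\<in>{0..<n}. A $$ (i,i))"
  proof -
    have "sum_list ds = (\<Sum>i\<in>{0..<n}. B $$ (i,i))"
      unfolding ds_def diag_mat_def using Bc by (simp add: sum_list_sum_nth)
    also have "\<dots> = (\<Sum>i\<in>{0..<n}. Ac $$ (i,i))" using trace_similar[OF Ac sim] by simp
    also have "\<dots> = complex_of_real (\<Sum>i\<in>{0..<n}. A $$ (i,i))" using A by (simp add: Ac_def)
    finally have "sum_list ds = complex_of_real (\<Sum>i\<in>{0..<n}. A $$ (i,i))" .
    moreover have "sum_list ds = complex_of_real (sum_list rs)" unfolding dsr
      by (induction rs) auto
    ultimately have "complex_of_real (sum_list rs) = complex_of_real (\<Sum>i\<in>{0..<n}. A $$ (i,i))" by metis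
    thus ?thesis by (simp only: of_real_eq_iff)
  qed
  ultimately show ?thesis by blast
qed


lemma powr_mhalf: "(x::real) > 0 \<Longrightarrow> x powr (-1/2) = 1 / sqrt x"
  by (simp add: powr_minus_divide powr_half_sqrt[symmetric])

lemma powr_mhalf': "(x::real) > 0 \<Longrightarrow> x powr - (1/2) = 1 / sqrt x"
  by (simp add: powr_minus_divide powr_half_sqrt[symmetric])

lemma exp_gt_add_one_self': assumes "(x::real) \<noteq> 0" shows "1 + x < exp x"
proof (cases "1 + x/2 \<ge> 0")
  case True
  have "1 + x/2 \<le> exp (x/2)" by (rule exp_ge_add_one_self)
  hence "(1 + x/2)\<^sup>2 \<le> (exp (x/2))\<^sup>2" using True by (intro power_mono) auto
  also have "(exp (x/2))\<^sup>2 = exp x" by (simp add: power2_eq_square exp_add[symmetric])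
  finally have "1 + x + x\<^sup>2/4 \<le> exp x" by (simp add: power2_eq_square algebra_simps)
  moreover have "x\<^sup>2 > 0" using assms by simp
  ultimately show ?thesis by linarith
next
  case False
  hence "1 + x < 0" by linarith
  thus ?thesis using exp_gt_zero[of x] by linarith
qed

lemma exp_sum_ge: "(\<Sum>x\<in>#M. exp x) \<ge> real (size M) + (\<Sum>x\<in>#M. x)"
proof (induction M)
  case empty then show ?case by simp
next
  case (add x M)
  have "1 + x \<le> exp x" by (rule exp_ge_add_one_self)
  with add show ?case by (simp add: algebra_simps del: exp_ge_add_one_self)
qed

lemma exp_sum_gt:
  assumes "x0 \<in># M" "x0 \<noteq> 0"
  shows "(\<Sum>x\<in>#M. exp x) > real (size M) + (\<Sum>x\<in>#M. x)"
proof -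
  obtain M' where M: "M = add_mset x0 M'" using assms(1) by (metis insert_DiffM)
  have "1 + x0 < exp x0" using assms(2) by (rule exp_gt_add_one_self')
  moreover have "(\<Sum>x\<in>#M'. exp x) \<ge> real (size M') + (\<Sum>x\<in>#M'. x)" by (rule exp_sum_ge)
  ultimately show ?thesis unfolding M by simp
qed

lemma exp_minus_mono: "0 \<le> t \<Longrightarrow> t \<le> (c::real) \<Longrightarrow> exp t - t \<le> exp c - c"
proof -
  assume t: "0 \<le> t" "t \<le> c"
  have "exp c = exp t * exp (c - t)" by (simp add: exp_diff)
  also have "\<dots> \<ge> exp t * (1 + (c - t))"
    by (intro mult_left_mono exp_ge_add_one_self) auto
  finally have "exp c \<ge> exp t + exp t * (c - t)" by (simp add: algebra_simps)
  moreover have "exp t * (c - t) \<ge> 1 * (c - t)" using t by (intro mult_right_mono) auto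
  ultimately show ?thesis by simp
qed



lemma sum_adj_pairs:
  fixes g :: "nat \<Rightarrow> nat \<Rightarrow> real"
  shows "(\<Sum>i<n. \<Sum>j<n. (if adj i j then 1 else 0) * g i j) = (\<Sum>(i,j)\<in>{(i,j). i<n \<and> j<n \<and> adj i j}. g i j)"
proof -
  have "(\<Sum>i<n. \<Sum>j<n. (if adj i j then 1 else 0) * g i j)
      = (\<Sum>(i,j)\<in>{..<n}\<times>{..<n}. (if adj i j then g i j else 0))"
    by (simp add: sum.cartesian_product) (intro sum.cong, auto)
  also have "\<dots> = (\<Sum>p\<in>{..<n}\<times>{..<n}. (if adj (fst p) (snd p) then g (fst p) (snd p) else 0))"
    by (intro sum.cong) auto
  also have "\<dots> = (\<Sum>p\<in>{p\<in>{..<n}\<times>{..<n}. adj (fst p) (snd p)}. g (fst p) (snd p))"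
    by (rule sum.inter_filter[symmetric]) auto
  also have "{p\<in>{..<n}\<times>{..<n}. adj (fst p) (snd p)} = {(i,j). i<n \<and> j<n \<and> adj i j}" by auto
  also have "(\<Sum>p\<in>{(i,j). i<n \<and> j<n \<and> adj i j}. g (fst p) (snd p)) = (\<Sum>(i,j)\<in>{(i,j). i<n \<and> j<n \<and> adj i j}. g i j)"
    by (intro sum.cong) auto
  finally show ?thesis .
qed

lemma finite_P: "finite {(i,j). i<n \<and> j<n \<and> (adj::nat\<Rightarrow>nat\<Rightarrow>bool) i j}"
  by (rule finite_subset[of _ "{..<n}\<times>{..<n}"]) auto

lemma finite_Pl: "finite {(i,j). i<j \<and> j<n \<and> (adj::nat\<Rightarrow>nat\<Rightarrow>bool) i j}"
  by (rule finite_subset[of _ "{..<n}\<times>{..<n}"]) auto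

lemma sum_P_Pl:
  fixes g :: "nat \<Rightarrow> nat \<Rightarrow> real"
  assumes sg: "simple_graph n adj" and gs: "\<And>i j. g i j = g j i"
  shows "(\<Sum>(i,j)\<in>{(i,j). i<n \<and> j<n \<and> adj i j}. g i j) = 2 * (\<Sum>(i,j)\<in>{(i,j). i<j \<and> j<n \<and> adj i j}. g i j)"
proof -
  let ?P = "{(i,j). i<n \<and> j<n \<and> adj i j}" and ?Pl = "{(i,j). i<j \<and> j<n \<and> adj i j}"
  let ?sw = "\<lambda>(i::nat,j::nat). (j,i)"
  have sgs: "\<And>i j. adj i j \<Longrightarrow> adj j i" "\<And>i. \<not> adj i i" using sg unfolding simple_graph_def by auto
  have P: "?P = ?Pl \<union> ?sw ` ?Pl"
  proof
    show "?P \<subseteq> ?Pl \<union> ?sw ` ?Pl"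
    proof
      fix p assume "p \<in> ?P"
      then obtain i j where p: "p = (i,j)" "i<n" "j<n" "adj i j" by auto
      have "i \<noteq> j" using p sgs by auto
      show "p \<in> ?Pl \<union> ?sw ` ?Pl"
      proof (cases "i < j")
        case True thus ?thesis using p by auto
      next
        case False
        hence "(j,i) \<in> ?Pl" using p \<open>i\<noteq>j\<close> sgs by auto
        hence "?sw (j,i) \<in> ?sw ` ?Pl" by blast
        thus ?thesis using p by auto
      qed
    qed
  next
    show "?Pl \<union> ?sw ` ?Pl \<subseteq> ?P" using sgs by auto
  qed
  have disj: "?Pl \<inter> ?sw ` ?Pl = {}" by auto
  have inj: "inj_on ?sw ?Pl" by (auto simp: inj_on_def)
  have "(\<Sum>(i,j)\<in>?sw ` ?Pl. g i j) = (\<Sum>p\<in>?Pl. (\<lambda>(i,j). g i j) (?sw p))"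
    by (rule sum.reindex[OF inj, unfolded o_def])
  also have "\<dots> = (\<Sum>(i,j)\<in>?Pl. g i j)" by (intro sum.cong) (auto simp: gs)
  finally have sw: "(\<Sum>(i,j)\<in>?sw ` ?Pl. g i j) = (\<Sum>(i,j)\<in>?Pl. g i j)" .
  have "(\<Sum>(i,j)\<in>?P. g i j) = (\<Sum>(i,j)\<in>?Pl. g i j) + (\<Sum>(i,j)\<in>?sw ` ?Pl. g i j)"
    unfolding P by (rule sum.union_disjoint) (use finite_Pl disj in auto)
  thus ?thesis using sw by simp
qed

lemma edges_img:
  assumes sg: "simple_graph n adj"
  shows "graph_edges n adj = (\<lambda>(i,j). {i,j}) ` {(i,j). i<j \<and> j<n \<and> adj i j}"
    and "inj_on (\<lambda>(i,j). {i,j}) {(i::nat,j). i<j \<and> j<n \<and> adj i j}"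
proof -
  have sgs: "\<And>i j. adj i j \<Longrightarrow> adj j i" "\<And>i. \<not> adj i i" using sg unfolding simple_graph_def by auto
  show "graph_edges n adj = (\<lambda>(i,j). {i,j}) ` {(i,j). i<j \<and> j<n \<and> adj i j}"
  proof
    show "graph_edges n adj \<subseteq> (\<lambda>(i,j). {i,j}) ` {(i,j). i<j \<and> j<n \<and> adj i j}"
    proof
      fix e assume "e \<in> graph_edges n adj"
      then obtain i j where e: "e = {i,j}" "i<n" "j<n" "adj i j" unfolding graph_edges_def by auto
      have "i \<noteq> j" using e sgs by auto
      show "e \<in> (\<lambda>(i,j). {i,j}) ` {(i,j). i<j \<and> j<n \<and> adj i j}"
      proof (cases "i < j")
        case True
        hence "(i,j) \<in> {(i,j). i<j \<and> j<n \<and> adj i j}" using e by auto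
        thus ?thesis using e by force
      next
        case False
        hence "(j,i) \<in> {(i,j). i<j \<and> j<n \<and> adj i j}" using e \<open>i\<noteq>j\<close> sgs by auto
        moreover have "e = (\<lambda>(i,j). {i,j}) (j,i)" using e by auto
        ultimately show ?thesis by blast
      qed
    qed
  next
    show "(\<lambda>(i,j). {i,j}) ` {(i,j). i<j \<and> j<n \<and> adj i j} \<subseteq> graph_edges n adj"
    proof
      fix e assume "e \<in> (\<lambda>(i,j). {i,j}) ` {(i,j). i<j \<and> j<n \<and> adj i j}"
      then obtain i j where "e = {i,j}" "i<j" "j<n" "adj i j" by auto
      thus "e \<in> graph_edges n adj" unfolding graph_edges_def
        by (intro CollectI exI[of _ i] exI[of _ j]) auto
    qed
  qed
  show "inj_on (\<lambda>(i,j). {i,j}) {(i::nat,j). i<j \<and> j<n \<and> adj i j}"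
    by (auto simp: inj_on_def doubleton_eq_iff)
qed

lemma card_P_degrees:
  "(\<Sum>i<n. real (degree n adj i)) = real (card {(i,j). i<n \<and> j<n \<and> adj i j})"
proof -
  have "{(i,j). i<n \<and> j<n \<and> adj i j} = (SIGMA i:{..<n}. {j. j<n \<and> adj i j})" by auto
  hence "card {(i,j). i<n \<and> j<n \<and> adj i j} = (\<Sum>i<n. card {j. j<n \<and> adj i j})"
    by (simp add: card_SigmaI)
  thus ?thesis unfolding degree_def by simp
qed


lemma proots_lin: "proots (\<Prod>r\<leftarrow>rs. [:-r,1::real:]) = mset rs"
proof (induction rs)
  case Nil then show ?case by simp
next
  case (Cons r rs)
  have e: "(\<Prod>x\<leftarrow>r#rs. [:-x,1::real:]) = [:-r,1:] * (\<Prod>x\<leftarrow>rs. [:-x,1:])" by simp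
  have nz: "(\<Prod>x\<leftarrow>rs. [:-x,1::real:]) \<noteq> 0" by (force simp: prod_list_zero_iff)
  have l: "proots [:-r,1::real:] = {#r#}" using proots_linear_factor[of "-r"] by simp
  have lnz: "[:-r,1::real:] \<noteq> 0" by simp
  show ?case unfolding e proots_mult[OF lnz nz] l Cons.IH by simp
qed

theorem mainTheorem1:
  fixes n :: nat and adj :: "nat \<Rightarrow> nat \<Rightarrow> bool"
  assumes "simple_graph n adj" and "connected_graph n adj" and "n \<ge> 2"
  defines "m \<equiv> real (card (graph_edges n adj))"
      and "R \<equiv> randic n adj"
  shows "estrada_index n adj > exp (m / R) + (real n - 1) - m / R"
proof -
  note sg = assms(1)
  have sgs: "\<And>i j. adj i j \<Longrightarrow> adj j i" "\<And>i. \<not> adj i i" "\<And>i j. adj i j \<Longrightarrow> i<n \<and> j<n"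
    using sg unfolding simple_graph_def by auto
  define a where "a = (\<lambda>i j. if adj i j then 1 else 0::real)"
  define A where "A = adj_matrix n adj"
  have A: "A \<in> carrier_mat n n" unfolding A_def adj_matrix_def by simp
  have Aij: "\<And>i j. i<n \<Longrightarrow> j<n \<Longrightarrow> A $$ (i,j) = a i j" unfolding A_def adj_matrix_def a_def by simp
  have asym: "\<And>i j. a i j = a j i" unfolding a_def using sgs(1) by auto
  have Asym: "\<And>i j. i<n \<Longrightarrow> j<n \<Longrightarrow> A $$ (i,j) = A $$ (j,i)" using Aij asym by simp
  obtain rs where rs: "char_poly A = (\<Prod>r\<leftarrow>rs. [:-r,1:])" "length rs = n"
      "sum_list rs = (\<Sum>i\<in>{0..<n}. A $$ (i,i))"
    using sym_char_poly_real[OF A Asym] by blast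
  have tr0: "sum_list rs = 0" using rs(3) Aij sgs(2) by (simp add: a_def)
  have eigs: "adj_eigenvalues n adj = mset rs"
    unfolding adj_eigenvalues_def A_def[symmetric] rs(1) by (rule proots_lin)
  have EE: "estrada_index n adj = (\<Sum>x\<in>#mset rs. exp x)" unfolding estrada_index_def eigs ..
  have n0: "n > 0" using assms(3) by simp
  obtain c x where cx: "\<exists>i<n. x i \<noteq> 0" "\<forall>i<n. (\<Sum>j<n. a i j * x j) = c * x i"
     "\<forall>y. (\<Sum>i<n. \<Sum>j<n. a i j * y i * y j) \<le> c * (\<Sum>i<n. (y i)\<^sup>2)"
    using rayleigh[of a n, OF asym n0] by blast
  have "eigenvalue A c"
  proof -
    define v where "v = vec n x"
    have vc: "v \<in> carrier_vec n" unfolding v_def by simp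
    have v0: "v \<noteq> 0\<^sub>v n"
    proof
      assume "v = 0\<^sub>v n"
      moreover obtain i where "i < n" "x i \<noteq> 0" using cx(1) by blast
      ultimately show False unfolding v_def by (metis index_vec index_zero_vec(1))
    qed
    have "A *\<^sub>v v = c \<cdot>\<^sub>v v"
    proof (rule eq_vecI)
      fix i assume "i < dim_vec (c \<cdot>\<^sub>v v)"
      hence i: "i < n" using vc by simp
      have "(A *\<^sub>v v) $ i = (\<Sum>j\<in>{0..<n}. A $$ (i,j) * x j)"
        using A i by (simp add: v_def scalar_prod_def)
      also have "\<dots> = (\<Sum>j<n. a i j * x j)"
        by (simp add: atLeast0LessThan Aij i)
      also have "\<dots> = c * x i" using cx(2) i by simp
      finally show "(A *\<^sub>v v) $ i = (c \<cdot>\<^sub>v v) $ i" using i by (simp add: v_def)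
    qed (use A vc in simp)
    thus ?thesis using A vc v0 unfolding eigenvalue_def eigenvector_def by auto
  qed
  hence "poly (char_poly A) c = 0" using eigenvalue_root_char_poly[OF A] by simp
  hence cin: "c \<in> set rs" unfolding rs(1) by (auto simp: poly_prod_list prod_list_zero_iff)
  define d where "d = (\<lambda>i. real (degree n adj i))"
  define P where "P = {(i,j). i<n \<and> j<n \<and> adj i j}"
  define Pl where "Pl = {(i,j). i<j \<and> j<n \<and> adj i j}"
  have finPl: "finite Pl" unfolding Pl_def by (rule finite_Pl)
  have dpos: "d i \<ge> 1" if "adj i j" for i j
  proof -
    have "j \<in> {k. k<n \<and> adj i k}" using that sgs(3) by auto
    moreover have "finite {k. k<n \<and> adj i k}" by simp
    ultimately have "card {k. k<n \<and> adj i k} > 0" by (auto simp: card_gt_0_iff)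
    thus ?thesis unfolding d_def degree_def by simp
  qed
  have Pldeg: "d i \<ge> 1 \<and> d j \<ge> 1" if "(i,j) \<in> Pl" for i j
    using that dpos sgs(1) unfolding Pl_def by blast
  have mPl: "m = real (card Pl)"
    unfolding assms(4) edges_img(1)[OF sg] Pl_def[symmetric]
    using edges_img(2)[OF sg] by (simp add: card_image Pl_def)
  define Rp where "Rp = (\<Sum>(i,j)\<in>Pl. 1 / sqrt (d i * d j))"
  define S where "S = (\<Sum>(i,j)\<in>Pl. sqrt (d i * d j))"
  have RR: "R = Rp"
  proof -
    have "R = (\<Sum>e\<in>(\<lambda>(i,j). {i,j}) ` Pl. (\<Prod>v\<in>e. real (degree n adj v)) powr (-1/2))"
      unfolding assms(5) randic_def general_randic_def edges_img(1)[OF sg] Pl_def ..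
    also have "\<dots> = (\<Sum>p\<in>Pl. (\<lambda>e. (\<Prod>v\<in>e. real (degree n adj v)) powr (-1/2)) ((\<lambda>(i,j). {i,j}) p))"
      by (rule sum.reindex[unfolded o_def]) (use edges_img(2)[OF sg] in \<open>simp add: Pl_def\<close>)
    also have "\<dots> = Rp" unfolding Rp_def
    proof (intro sum.cong refl)
      fix p assume p: "p \<in> Pl"
      obtain i j where ij: "p = (i,j)" by (cases p)
      have ne: "i \<noteq> j" using p ij unfolding Pl_def by auto
      have pos: "d i * d j > 0" using Pldeg[of i j] p ij by (simp add: mult_pos_pos)
      show "(\<lambda>e. (\<Prod>v\<in>e. real (degree n adj v)) powr (-1/2)) ((\<lambda>(i,j). {i,j}) p) = (case p of (i,j) \<Rightarrow> 1 / sqrt (d i * d j))"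
        using ne pos unfolding ij by (simp add: d_def powr_mhalf')
    qed
    finally show ?thesis .
  qed
  have PPl: "real (card P) = 2 * real (card Pl)"
    using sum_P_Pl[OF sg, of "\<lambda>_ _. 1"] unfolding P_def Pl_def by simp
  have Ny: "(\<Sum>i<n. (sqrt (d i))\<^sup>2) = 2 * m"
  proof -
    have "(\<Sum>i<n. (sqrt (d i))\<^sup>2) = (\<Sum>i<n. d i)" by (simp add: d_def)
    also have "\<dots> = real (card P)" unfolding d_def P_def by (rule card_P_degrees)
    finally show ?thesis using PPl mPl by simp
  qed
  have Qy: "(\<Sum>i<n. \<Sum>j<n. a i j * sqrt (d i) * sqrt (d j)) = 2 * S"
  proof -
    have "(\<Sum>i<n. \<Sum>j<n. a i j * sqrt (d i) * sqrt (d j))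
        = (\<Sum>i<n. \<Sum>j<n. (if adj i j then 1 else 0) * (sqrt (d i) * sqrt (d j)))"
      unfolding a_def by (simp add: mult.assoc)
    also have "\<dots> = (\<Sum>(i,j)\<in>P. sqrt (d i) * sqrt (d j))" unfolding P_def by (rule sum_adj_pairs)
    also have "\<dots> = 2 * (\<Sum>(i,j)\<in>Pl. sqrt (d i) * sqrt (d j))"
      unfolding P_def Pl_def by (rule sum_P_Pl[OF sg]) (simp add: mult.commute)
    finally show ?thesis unfolding S_def by (simp add: real_sqrt_mult)
  qed
  have SC: "S \<le> c * m"
    using cx(3)[rule_format, of "\<lambda>i. sqrt (d i)"] Qy Ny by simp
  have CS: "m\<^sup>2 \<le> S * Rp"
  proof -
    define f where "f = (\<lambda>(i,j). sqrt (sqrt (d i * d j)))"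
    have fpos: "f p > 0" if "p \<in> Pl" for p
    proof -
      obtain i j where ij: "p = (i,j)" by (cases p)
      have "d i * d j > 0" using Pldeg[of i j] that ij by (simp add: mult_pos_pos)
      thus ?thesis unfolding f_def ij by simp
    qed
    have "(\<Sum>p\<in>Pl. f p * (1 / f p))\<^sup>2 \<le> (\<Sum>p\<in>Pl. (f p)\<^sup>2) * (\<Sum>p\<in>Pl. (1 / f p)\<^sup>2)"
      by (rule Cauchy_Schwarz_ineq_sum)
    moreover have "(\<Sum>p\<in>Pl. f p * (1 / f p)) = m"
    proof -
      have "(\<Sum>p\<in>Pl. f p * (1 / f p)) = (\<Sum>p\<in>Pl. 1)"
      proof (intro sum.cong refl)
        fix p assume "p \<in> Pl"
        hence "f p \<noteq> 0" using fpos[of p] by linarith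
        thus "f p * (1 / f p) = 1" by simp
      qed
      thus ?thesis using mPl by simp
    qed
    moreover have "(\<Sum>p\<in>Pl. (f p)\<^sup>2) = S" unfolding S_def f_def
    proof (intro sum.cong refl)
      fix p assume p: "p \<in> Pl"
      obtain i j where ij: "p = (i,j)" by (cases p)
      have "d i * d j > 0" using Pldeg[of i j] p ij by (simp add: mult_pos_pos)
      thus "(case p of (i,j) \<Rightarrow> sqrt (sqrt (d i * d j)))\<^sup>2 = (case p of (i,j) \<Rightarrow> sqrt (d i * d j))"
        unfolding ij by simp
    qed
    moreover have "(\<Sum>p\<in>Pl. (1 / f p)\<^sup>2) = Rp" unfolding Rp_def f_def
    proof (intro sum.cong refl)
      fix p assume p: "p \<in> Pl"
      obtain i j where ij: "p = (i,j)" by (cases p)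
      have "d i * d j > 0" using Pldeg[of i j] p ij by (simp add: mult_pos_pos)
      thus "(1 / (case p of (i,j) \<Rightarrow> sqrt (sqrt (d i * d j))))\<^sup>2 = (case p of (i,j) \<Rightarrow> 1 / sqrt (d i * d j))"
        unfolding ij by (simp add: power_divide)
    qed
    ultimately show ?thesis by simp
  qed
  have Pne: "Pl \<noteq> {}"
  proof -
    have "adj\<^sup>*\<^sup>* 0 1" using assms(2,3) unfolding connected_graph_def by auto
    hence "\<exists>k. adj 0 k" by (cases rule: converse_rtranclpE) auto
    then obtain k where "adj 0 k" by blast
    hence "(0,k) \<in> P" using sgs(3) unfolding P_def by auto
    hence "card P > 0" unfolding P_def using finite_P by (auto simp: card_gt_0_iff)
    hence "card Pl > 0" using PPl by simp
    thus ?thesis by auto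
  qed
  have mpos: "m > 0" using Pne finPl mPl by (simp add: card_gt_0_iff)
  have Rpos: "Rp > 0" unfolding Rp_def
  proof (rule sum_pos[OF finPl Pne])
    fix p assume p: "p \<in> Pl"
    obtain i j where ij: "p = (i,j)" by (cases p)
    have "d i * d j > 0" using Pldeg[of i j] p ij by (simp add: mult_pos_pos)
    thus "0 < (case p of (i,j) \<Rightarrow> 1 / sqrt (d i * d j))" unfolding ij by simp
  qed
  have cbound: "m / R \<le> c"
  proof -
    have "S * Rp \<le> c * m * Rp" using SC Rpos by (intro mult_right_mono) auto
    hence "m * m \<le> c * m * Rp" using CS by (simp add: power2_eq_square)
    hence "m \<le> c * Rp" using mpos by (simp add: mult.commute mult.left_commute)
    thus ?thesis using Rpos RR by (simp add: divide_le_eq)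
  qed
  have mR0: "m / R > 0" using mpos Rpos RR by simp
  have cpos: "c > 0" using cbound mR0 by linarith
  define M' where "M' = mset rs - {#c#}"
  have Mdec: "mset rs = add_mset c M'" unfolding M'_def using cin by simp
  have sM': "(\<Sum>x\<in>#M'. x) = - c"
  proof -
    have "sum_mset (mset rs) = 0" using tr0 by (simp add: sum_mset_sum_list)
    thus ?thesis unfolding Mdec by simp
  qed
  have szM': "real (size M') = real n - 1"
  proof -
    have "size (mset rs) = n" using rs(2) by simp
    hence "size M' = n - 1" unfolding Mdec by simp
    thus ?thesis using n0 by simp
  qed
  obtain x0 where x0: "x0 \<in># M'" "x0 \<noteq> 0"
  proof -
    have "\<exists>x0\<in>#M'. x0 \<noteq> 0"
    proof (rule ccontr)
      assume "\<not> ?thesis"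
      hence "(\<Sum>x\<in>#M'. x) = 0" by (simp add: sum_mset.neutral)
      thus False using sM' cpos by simp
    qed
    thus ?thesis using that by blast
  qed
  have "(\<Sum>x\<in>#M'. exp x) > real (size M') + (\<Sum>x\<in>#M'. x)" by (rule exp_sum_gt[OF x0])
  hence "estrada_index n adj > exp c + (real n - 1) - c"
    unfolding EE Mdec using szM' sM' by simp
  moreover have "exp (m / R) - m / R \<le> exp c - c"
    using exp_minus_mono[of "m/R" c] mR0 cbound by simp
  ultimately show ?thesis by linarith
qed

end
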